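(* All points $\mathbf{p}_\sigma^{(\delta)}$, for $\sigma\in\{-1,1\}^d$ with $\sigma_{d-1}=\sigma_d=1$ and $\delta=1/L>0$ sufficiently small, are pairwise distinct, and so are all the points $\mathbf{q}_\sigma$.
   Context: Fix $\epsilon,\gamma$ with $0<4\gamma<\epsilon<\frac12$. The Goldfarb cube $\mathrm{Gol}_d\subseteq\mathbb{R}^d$ is the set of $\mathbf{x}$ with $-z_1\le x_1\le z_1:=1$, $-z_2\le x_2\le z_2:=1-\epsilon-\epsilon x_1$, $-z_k\le x_k\le z_k:=1-\epsilon+\epsilon\gamma-\epsilon(x_{k-1}-\gamma x_{k-2})$ ($3\le k\le d$); its vertices are $\mathbf{v}_\sigma$, $\sigma\in\{-1,1\}^d$ (the vertex where, for each $k$, the upper inequality is tight if $\sigma_k=1$ and the lower one if $\sigma_k=-1$), with $\mathrm{sign}(v_{\sigma,k})=\sigma_k$. The dual Goldfarb cube is $\mathrm{Gol}^{\triangle}_d=\bigcap_{\tau}\{\mathbf{x}:\mathbf{v}_\tau^T\mathbf{x}\le1\}$. Let $\mathcal{S}:=\{\mathbf{x}\in\mathbb{R}^d: x_1=\ldots=x_{d-2}=0\}$. For $\mathbf{x}$ and $L\ge0$, $\mathbf{x}(L):=(Lx_1,\ldots,Lx_{d-2},x_{d-1},x_d)$, $\mathcal{P}(L):=\{\mathbf{x}(L):\mathbf{x}\in\mathcal{P}\}$; with $\delta=1/L$, $\mathrm{Gol}^{\triangle}_d(L)=\bigcap_\tau\{\mathbf{x}:\mathbf{v}_\tau(\delta)^T\mathbf{x}\le1\}$.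 For each $\sigma$ there is $\mathbf{p}_\sigma\in\mathcal{S}\cap\mathrm{Gol}^{\triangle}_d$ with $\mathbf{p}_\sigma^T\mathbf{v}_\sigma=1$, $\mathbf{p}_\sigma^T\mathbf{v}_\tau<1$ ($\tau\ne\sigma$). Let $\mathcal{L}:=\{(0,\ldots,0,2,y)^T:y\in\mathbb{R}\}$. Define $\mathbf{q}_\sigma:=\mathbf{p}_\sigma-C\,\mathbf{v}_\sigma(0)/\|\mathbf{v}_\sigma(0)\|^2$ with $C<0$ chosen so that $q_{\sigma,d-1}=2$, and $\mathbf{p}_\sigma^{(\delta)}:=C\,\mathbf{v}_\sigma(\delta)/\|\mathbf{v}_\sigma(\delta)\|^2+\mathbf{q}_\sigma$ (projection of $\mathbf{q}_\sigma$ onto $\mathbf{v}_\sigma(\delta)^T\mathbf{x}=1$). Known result used: for $\sigma_{d-1}=\sigma_d=1$ and $\delta$ small, (i) $\mathbf{v}_\sigma(\delta)^T\mathbf{p}_\sigma^{(\delta)}=1$ and $\mathbf{v}_\tau(\delta)^T\mathbf{p}_\sigma^{(\delta)}<1$ for $\tau\ne\sigma$; (ii) $(\mathbf{p}_\sigma^{(\delta)},\mathbf{q}_\sigma)$ is the unique pair minimizing $\|\mathbf{x}-\mathbf{x}'\|$ over $\mathbf{x}\in\mathrm{Gol}^{\triangle}_d(L)$, $\mathbf{x}'\in\mathcal{L}$, $x'_d\ge q_{\sigma,d}$. *)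

theory Defs
  imports Complex_Main
begin

text \<open>Vectors of R^d are represented as functions nat => real, coordinates indexed 1..d.\<close>

definition sign_vectors :: "nat \<Rightarrow> (nat \<Rightarrow> real) set" where
  "sign_vectors d = {s. (\<forall>k\<in>{1..d}. s k \<in> {-1, 1}) \<and> (\<forall>k. k \<notin> {1..d} \<longrightarrow> s k = 0)}"

text \<open>Vertex v_sigma of the Goldfarb cube: coordinate k equals sigma_k * z_k(v).\<close>
fun gol_vtx :: "real \<Rightarrow> real \<Rightarrow> (nat \<Rightarrow> real) \<Rightarrow> nat \<Rightarrow> real" where
  "gol_vtx e g s 0 = 0"
| "gol_vtx e g s (Suc 0) = s 1 * 1"
| "gol_vtx e g s (Suc (Suc 0)) = s 2 * (1 - e - e * gol_vtx e g s 1)"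
| "gol_vtx e g s (Suc (Suc (Suc k))) =
     s (k + 3) * (1 - e + e * g - e * (gol_vtx e g s (k + 2) - g * gol_vtx e g s (k + 1)))"

definition ip :: "nat \<Rightarrow> (nat \<Rightarrow> real) \<Rightarrow> (nat \<Rightarrow> real) \<Rightarrow> real" where
  "ip d x y = (\<Sum>k=1..d. x k * y k)"

definition dual_gol :: "nat \<Rightarrow> real \<Rightarrow> real \<Rightarrow> (nat \<Rightarrow> real) set" where
  "dual_gol d e g = {x. \<forall>t\<in>sign_vectors d. ip d (gol_vtx e g t) x \<le> 1}"

definition subS :: "nat \<Rightarrow> (nat \<Rightarrow> real) set" where
  "subS d = {x. \<forall>k\<in>{1..d-2}. x k = 0}"

text \<open>x(L) with delta = 1/L: first d-2 coordinates scaled by delta.\<close>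
definition scl :: "nat \<Rightarrow> real \<Rightarrow> (nat \<Rightarrow> real) \<Rightarrow> nat \<Rightarrow> real" where
  "scl d \<delta> x k = (if 1 \<le> k \<and> k \<le> d - 2 then \<delta> * x k else x k)"

text \<open>C_sigma, chosen so that the (d-1)-th coordinate of q_sigma equals 2.\<close>
definition Cconst :: "nat \<Rightarrow> real \<Rightarrow> real \<Rightarrow> (nat \<Rightarrow> real) \<Rightarrow> (nat \<Rightarrow> real) \<Rightarrow> real" where
  "Cconst d e g p s = (let v0 = scl d 0 (gol_vtx e g s) in
     (p (d - 1) - 2) * ip d v0 v0 / v0 (d - 1))"

definition qpt :: "nat \<Rightarrow> real \<Rightarrow> real \<Rightarrow> (nat \<Rightarrow> real) \<Rightarrow> (nat \<Rightarrow> real) \<Rightarrow> nat \<Rightarrow> real" where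
  "qpt d e g p s k = (let v0 = scl d 0 (gol_vtx e g s) in
     p k - Cconst d e g p s * v0 k / ip d v0 v0)"

definition pdelta :: "nat \<Rightarrow> real \<Rightarrow> real \<Rightarrow> real \<Rightarrow> (nat \<Rightarrow> real) \<Rightarrow> (nat \<Rightarrow> real) \<Rightarrow> nat \<Rightarrow> real" where
  "pdelta d e g \<delta> p s k = (let vd = scl d \<delta> (gol_vtx e g s) in
     Cconst d e g p s * vd k / ip d vd vd + qpt d e g p s k)"

end

theory Submission
  imports Defs "HOL-Library.FuncSet"
begin

fun zz :: "real \<Rightarrow> real \<Rightarrow> (nat \<Rightarrow> real) \<Rightarrow> nat \<Rightarrow> real" where
  "zz e g s 0 = 0"
| "zz e g s (Suc 0) = 1"
| "zz e g s (Suc (Suc 0)) = 1 - e - e * gol_vtx e g s 1"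
| "zz e g s (Suc (Suc (Suc k))) = 1 - e + e * g - e * (gol_vtx e g s (k + 2) - g * gol_vtx e g s (k + 1))"

lemma gol_zz: "gol_vtx e g s k = s k * zz e g s k"
  by (induction e g s k rule: gol_vtx.induct) (simp_all add: numeral_eq_Suc)

lemma gol_local: "(\<forall>j\<le>k. s j = s' j) \<Longrightarrow> gol_vtx e g s k = gol_vtx e g s' k"
proof (induction e g s k rule: gol_vtx.induct)
  case (4 e g s k)
  have a: "gol_vtx e g s (k+2) = gol_vtx e g s' (k+2)" using 4 by simp
  have b: "gol_vtx e g s (k+1) = gol_vtx e g s' (k+1)" using 4 by simp
  have c: "s (k+3) = s' (k+3)" using 4(3) by (simp add: numeral_eq_Suc)
  show ?case using a b c by simp
qed (auto simp: numeral_eq_Suc)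

lemma zz_local: "(\<forall>j<k. s j = s' j) \<Longrightarrow> zz e g s k = zz e g s' k"
proof -
  assume h: "\<forall>j<k. s j = s' j"
  show ?thesis
  proof (cases k)
    case (Suc k1)
    show ?thesis
    proof (cases k1)
      case (Suc k2)
      show ?thesis
      proof (cases k2)
        case 0 then show ?thesis using h \<open>k = Suc k1\<close> Suc gol_local[of 1 s s' e g] by simp
      next
        case (Suc k3)
        have a: "gol_vtx e g s (k3+2) = gol_vtx e g s' (k3+2)"
          by (rule gol_local) (use h \<open>k = Suc k1\<close> \<open>k1 = Suc k2\<close> Suc in auto)
        have b: "gol_vtx e g s (k3+1) = gol_vtx e g s' (k3+1)"
          by (rule gol_local) (use h \<open>k = Suc k1\<close> \<open>k1 = Suc k2\<close> Suc in auto)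
        show ?thesis using a b \<open>k = Suc k1\<close> \<open>k1 = Suc k2\<close> Suc by simp
      qed
    qed (simp add: \<open>k = Suc k1\<close>)
  qed simp
qed

lemma all_minus:
  "(\<forall>j. 1 \<le> j \<and> j \<le> m \<longrightarrow> s j = -1) \<Longrightarrow>
   (\<forall>j. 1 \<le> j \<and> j \<le> m \<longrightarrow> gol_vtx e g s j = -1) \<and> zz e g s (Suc m) = 1"
proof (induction m)
  case 0 then show ?case by simp
next
  case (Suc m)
  then have IH: "\<forall>j. 1 \<le> j \<and> j \<le> m \<longrightarrow> gol_vtx e g s j = -1" "zz e g s (Suc m) = 1" by auto
  have g1: "gol_vtx e g s (Suc m) = -1" using IH(2) Suc.prems gol_zz[of e g s "Suc m"] by simp
  have A: "\<forall>j. 1 \<le> j \<and> j \<le> Suc m \<longrightarrow> gol_vtx e g s j = -1"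
    using IH(1) g1 le_Suc_eq by blast
  have B: "zz e g s (Suc (Suc m)) = 1"
  proof (cases m)
    case 0 then show ?thesis using g1 by simp
  next
    case (Suc m')
    have "gol_vtx e g s (m'+2) = -1" using g1 Suc by simp
    moreover have "gol_vtx e g s (m'+1) = -1" using IH(1) Suc by simp
    ultimately show ?thesis using Suc by (simp add: algebra_simps)
  qed
  show ?case using A B by blast
qed

lemma gol_inv:
  assumes e: "0 < e" "e < 1/2" and g: "0 < g" "4 * g < e"
    and sg: "\<forall>j. 1 \<le> j \<and> j \<le> n \<longrightarrow> s j = 1 \<or> s j = -1"
  shows "1 \<le> k \<and> k \<le> n \<Longrightarrow> 1 - 2*e \<le> zz e g s k \<and> zz e g s k \<le> 1 \<and>
     (2 \<le> k \<longrightarrow> zz e g s k + 2 * g * gol_vtx e g s (k-1) \<le> 1 - 2 * g)"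
proof (induction k rule: less_induct)
  case (less k)
  have absb: "\<bar>gol_vtx e g s j\<bar> \<le> 1" if "j < k" "1 \<le> j" for j
  proof -
    have "1 - 2*e \<le> zz e g s j \<and> zz e g s j \<le> 1" using less.IH[of j] that less.prems by auto
    moreover have "s j = 1 \<or> s j = -1" using sg that less.prems by auto
    ultimately show ?thesis using gol_zz[of e g s j] e by auto
  qed
  show ?case
  proof (cases k)
    case 0 then show ?thesis using less.prems by simp
  next
    case (Suc k1)
    show ?thesis
    proof (cases k1)
      case 0 then show ?thesis using Suc e by simp
    next
      case (Suc k2)
      note k1 = \<open>k = Suc k1\<close>
      show ?thesis
      proof (cases k2)
        case 0
        have k: "k = 2" using k1 Suc 0 by simp
        have s1: "s 1 = 1 \<or> s 1 = -1" using sg less.prems k by auto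
        have x1: "gol_vtx e g s 1 = s 1" by simp
        have z2: "zz e g s 2 = 1 - e - e * s 1" by (simp add: numeral_eq_Suc)
        show ?thesis using s1 e g unfolding k z2 by (auto simp: x1 algebra_simps)
      next
        case (Suc k3)
        have k: "k = k3 + 3" using k1 \<open>k1 = Suc k2\<close> Suc by simp
        define a where "a = gol_vtx e g s (k3+2)"
        define b where "b = gol_vtx e g s (k3+1)"
        define zA where "zA = zz e g s (k3+2)"
        have IHA: "1 - 2*e \<le> zA" "zA \<le> 1" "zA + 2 * g * b \<le> 1 - 2 * g"
          using less.IH[of "k3+2"] less.prems k unfolding zA_def b_def by auto
        have ab: "\<bar>a\<bar> \<le> 1" "\<bar>b\<bar> \<le> 1" using absb[of "k3+2"] absb[of "k3+1"] k
          unfolding a_def b_def by auto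
        have sA: "s (k3+2) = 1 \<or> s (k3+2) = -1" using sg less.prems k by auto
        have aA: "a = s (k3+2) * zA" unfolding a_def zA_def by (rule gol_zz)
        have z: "zz e g s k = 1 - e + e * g - e * (a - g * b)"
          unfolding k a_def b_def by (simp add: numeral_eq_Suc)
        have km1: "k - 1 = k3 + 2" using k by simp
        have gb0: "\<bar>g * b\<bar> \<le> g" using ab g by (simp add: abs_mult)
        have ua: "a - g * b \<le> 1 + g" using ab gb0 by auto
        have ub: "g - 1 \<le> a - g * b"
          using sA
        proof
          assume "s (k3+2) = 1"
          then have "a = zA" using aA by simp
          then show ?thesis using IHA gb0 e g by auto
        next
          assume "s (k3+2) = -1"
          then have "a = - zA" using aA by simp
          then show ?thesis using IHA gb0 e g by auto
        qed
        have zlo: "1 - 2*e \<le> zz e g s k" unfolding z using mult_left_mono[OF ua, of e] e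
          by (simp add: algebra_simps)
        have zhi: "zz e g s k \<le> 1" unfolding z using mult_left_mono[OF ub, of e] e
          by (simp add: algebra_simps)
        have W: "zz e g s k + 2 * g * a \<le> 1 - 2 * g"
          using sA
        proof
          assume "s (k3+2) = 1"
          then have aa: "a = zA" using aA by simp
          have h1: "0 \<le> (e - 2*g) * (zA - (1 - 2*e))" using IHA g by auto
          have h2: "e * g * b \<le> e * g" using ab e g by (simp add: abs_le_iff)
          have h3: "e * (2*e - 1) < 0" using e by (simp add: mult_pos_neg)
          have h4: "0 < e * g" using e g by simp
          have eq: "(1 - 2*g) - ((1 - e + e * g - e * (zA - g * b)) + 2 * g * zA)
              = (e - 2*g) * (zA - (1 - 2*e)) + (e * g - e * g * b) + (2*e - 4*g - 2*(e*e) + 2*(e*g))"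
            by (simp add: algebra_simps)
          have h3': "2*(e*e) < e" using h3 by (simp add: algebra_simps)
          show ?thesis unfolding z aa using eq h1 h2 h3' h4 g e by linarith
        next
          assume "s (k3+2) = -1"
          then have aa: "a = - zA" using aA by simp
          have h1: "0 \<le> (e - 2*g) * (1 - 2*g - 2*g*b - zA)" using IHA g by auto
          have h2: "0 \<le> (1 + b) * (g * (e - 4*g))" using ab g by (auto simp: abs_le_iff)
          have eq: "(1 - 2*g) - ((1 - e + e * g - e * (- zA - g * b)) + 2 * g * (- zA))
              = (e - 2*g) * (1 - 2*g - 2*g*b - zA) + (1 + b) * (g * (e - 4*g))"
            by (simp add: algebra_simps)
          show ?thesis unfolding z aa using eq h1 h2 by linarith
        qed
        show ?thesis using zlo zhi W km1 unfolding a_def by auto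
      qed
    qed
  qed
qed

lemma ip_comm: "ip d x y = ip d y x"
  unfolding ip_def by (simp add: mult.commute)

lemma ip_last2:
  assumes "2 \<le> d" "\<forall>k\<in>{1..d-2}. x k = 0"
  shows "ip d x y = x (d-1) * y (d-1) + x d * y d"
proof -
  have U: "{1..d} = {1..d-2} \<union> {d-1, d}" using assms(1) by auto
  have D: "{1..d-2} \<inter> {d-1, d} = {}" by auto
  have "ip d x y = (\<Sum>k\<in>{1..d-2}. x k * y k) + (\<Sum>k\<in>{d-1,d}. x k * y k)"
    unfolding ip_def U by (rule sum.union_disjoint) (use D in auto)
  also have "(\<Sum>k\<in>{1..d-2}. x k * y k) = 0" using assms(2) by simp
  also have "(\<Sum>k\<in>{d-1,d}. x k * y k) = x (d-1) * y (d-1) + x d * y d"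
    using assms(1) by simp
  finally show ?thesis by simp
qed

lemma isCont_scl [continuous_intros]: "isCont (\<lambda>\<delta>. scl d \<delta> x k) a"
proof (cases "1 \<le> k \<and> k \<le> d - 2")
  case True
  then have "(\<lambda>\<delta>. scl d \<delta> x k) = (\<lambda>\<delta>. \<delta> * x k)" by (auto simp: scl_def)
  then show ?thesis by (simp only:) (intro continuous_intros)
next
  case False
  then have "(\<lambda>\<delta>. scl d \<delta> x k) = (\<lambda>\<delta>. x k)" by (auto simp: scl_def)
  then show ?thesis by simp
qed

lemma finite_sv: "finite (sign_vectors d)"
proof -
  have inj: "inj_on (\<lambda>s. restrict s {1..d}) (sign_vectors d)"
  proof (rule inj_onI)
    fix s s' assume s: "s \<in> sign_vectors d" "s' \<in> sign_vectors d"
      and eq: "restrict s {1..d} = restrict s' {1..d}"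
    show "s = s'"
    proof
      fix k show "s k = s' k"
      proof (cases "k \<in> {1..d}")
        case True then show ?thesis using fun_cong[OF eq, of k] by simp
      next
        case False then show ?thesis using s by (simp add: sign_vectors_def)
      qed
    qed
  qed
  have sub: "(\<lambda>s. restrict s {1..d}) ` sign_vectors d \<subseteq> {1..d} \<rightarrow>\<^sub>E {-1, 1::real}"
    by (auto simp: sign_vectors_def)
  have "finite ((\<lambda>s. restrict s {1..d}) ` sign_vectors d)"
    by (rule finite_subset[OF sub]) (simp add: finite_PiE)
  then show ?thesis using finite_imageD inj by blast
qed

lemma alg_q:
  fixes a1 a2 b1 b2 p1 p2 r1 r2 :: real
  assumes pos: "a1 > 0" "b1 > 0"
    and h: "a1*p1 + a2*p2 = 1" "b1*p1 + b2*p2 < 1" "a1*r1 + a2*r2 < 1" "b1*r1 + b2*r2 = 1"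
    and p: "p1 < 2" "r1 < 2"
    and eq: "p2 - (p1 - 2) * a2 / a1 = r2 - (r1 - 2) * b2 / b1"
  shows False
proof -
  define s where "s = (2 - p1) / a1"
  define t where "t = (2 - r1) / b1"
  have s0: "s > 0" "t > 0" using p pos by (auto simp: s_def t_def)
  have p1: "p1 = 2 - s * a1" "r1 = 2 - t * b1" using pos by (auto simp: s_def t_def)
  define y where "y = p2 + s * a2"
  have y1: "y = p2 + s * a2" by (simp add: y_def)
  have y2: "y = r2 + t * b2" using eq pos unfolding y_def s_def t_def
    by (simp add: field_simps)
  define Na where "Na = a1*a1 + a2*a2"
  define Nb where "Nb = b1*b1 + b2*b2"
  define c where "c = a1*b1 + a2*b2"
  have A1: "a1*2 + a2*y = (a1*p1 + a2*p2) + s * Na" unfolding y1 Na_def p1 by (simp add: algebra_simps)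
  have A2: "a1*2 + a2*y = (a1*r1 + a2*r2) + t * c" unfolding y2 c_def p1 by (simp add: algebra_simps)
  have B1: "b1*2 + b2*y = (b1*p1 + b2*p2) + s * c" unfolding y1 c_def p1 by (simp add: algebra_simps)
  have B2: "b1*2 + b2*y = (b1*r1 + b2*r2) + t * Nb" unfolding y2 Nb_def p1 by (simp add: algebra_simps)
  have i1: "s * Na < t * c" using A1 A2 h by linarith
  have i2: "t * Nb < s * c" using B1 B2 h by linarith
  have Na0: "Na > 0" unfolding Na_def using pos by (simp add: add_pos_nonneg)
  have Nb0: "Nb > 0" unfolding Nb_def using pos by (simp add: add_pos_nonneg)
  have "(s * Na) * (t * Nb) < (t * c) * (s * c)"
    by (rule mult_strict_mono') (use i1 i2 s0 Na0 Nb0 in auto)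
  then have "(s*t) * (Na * Nb) < (s*t) * (c*c)" by (simp add: algebra_simps)
  then have "Na * Nb < c * c" using s0 by (simp add: mult_less_cancel_left_pos)
  moreover have "c * c \<le> Na * Nb"
  proof -
    have "0 \<le> (a1*b2 - a2*b1)^2" by simp
    then show ?thesis unfolding Na_def Nb_def c_def by (simp add: power2_eq_square algebra_simps)
  qed
  ultimately show False by simp
qed

lemma scl_last: "2 \<le> d \<Longrightarrow> scl d \<delta> x (d-1) = x (d-1) \<and> scl d \<delta> x d = x d"
proof -
  assume "2 \<le> d"
  then have "\<not> (d-1 \<le> d-2)" "\<not> (d \<le> d-2)" by arith+
  then show ?thesis by (simp add: scl_def)
qed

lemma scl0_zero: "\<forall>k\<in>{1..d-2}. scl d 0 x k = 0"
  by (simp add: scl_def)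

lemma N_pos:
  assumes "2 \<le> d" "x (d-1) \<noteq> 0"
  shows "ip d (scl d \<delta> x) (scl d \<delta> x) > 0"
proof -
  have "scl d \<delta> x (d-1) * scl d \<delta> x (d-1) \<le> ip d (scl d \<delta> x) (scl d \<delta> x)"
    unfolding ip_def by (rule member_le_sum) (use assms(1) in auto)
  moreover have "x (d-1) * x (d-1) > 0" using assms(2) by (auto simp: zero_less_mult_iff linorder_neq_iff)
  then have "scl d \<delta> x (d-1) * scl d \<delta> x (d-1) > 0" using scl_last[OF assms(1)] by simp
  ultimately show ?thesis by linarith
qed

lemma q_d:
  assumes "2 \<le> d" "gol_vtx e g s (d-1) \<noteq> 0"
  shows "qpt d e g p s d = p d - (p (d-1) - 2) * gol_vtx e g s d / gol_vtx e g s (d-1)"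
proof -
  have N: "ip d (scl d 0 (gol_vtx e g s)) (scl d 0 (gol_vtx e g s)) > 0" by (rule N_pos[where x="gol_vtx e g s", OF assms])
  show ?thesis unfolding qpt_def Cconst_def Let_def using N scl_last[OF assms(1)] assms(2)
    by (simp add: field_simps)
qed

lemma pd_zero: "pdelta d e g 0 p s = p"
  unfolding pdelta_def qpt_def Let_def by auto

lemma pd_self:
  assumes d: "2 \<le> d" and v: "gol_vtx e g s (d-1) \<noteq> 0" and p: "\<forall>k\<in>{1..d-2}. p k = 0"
  shows "ip d (scl d \<delta> (gol_vtx e g s)) (pdelta d e g \<delta> p s) = ip d p (gol_vtx e g s)"
proof -
  define w where "w = gol_vtx e g s"
  define vd where "vd = scl d \<delta> w"
  define v0 where "v0 = scl d 0 w"
  define C where "C = Cconst d e g p s"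
  define Nd where "Nd = ip d vd vd"
  define N where "N = ip d v0 v0"
  have Nd: "Nd > 0" unfolding Nd_def vd_def w_def by (rule N_pos[where x="gol_vtx e g s", OF d v])
  have N0: "N > 0" unfolding N_def v0_def w_def by (rule N_pos[where x="gol_vtx e g s", OF d v])
  have pd: "pdelta d e g \<delta> p s = (\<lambda>k. C * vd k / Nd + (p k - C * v0 k / N))"
    unfolding pdelta_def qpt_def Let_def C_def vd_def v0_def Nd_def N_def w_def by simp
  have "ip d vd (pdelta d e g \<delta> p s) = C / Nd * ip d vd vd + ip d vd p - C / N * ip d vd v0"
    unfolding pd ip_def
    by (simp add: sum.distrib sum_subtractf sum_distrib_left sum_divide_distrib algebra_simps)
  also have "ip d vd vd = Nd" by (simp add: Nd_def)
  also have "ip d vd p = ip d p w"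
    using ip_last2[OF d p, of vd] ip_last2[OF d p, of w] scl_last[OF d] unfolding vd_def
    by (simp add: ip_comm)
  also have "ip d vd v0 = N"
  proof -
    have z: "\<forall>k\<in>{1..d-2}. v0 k = 0" unfolding v0_def by (rule scl0_zero)
    have "ip d vd v0 = ip d v0 vd" by (rule ip_comm)
    also have "\<dots> = v0 (d-1) * vd (d-1) + v0 d * vd d" by (rule ip_last2[OF d z])
    also have "\<dots> = v0 (d-1) * v0 (d-1) + v0 d * v0 d" using scl_last[OF d] unfolding vd_def v0_def by simp
    also have "\<dots> = N" unfolding N_def by (rule ip_last2[OF d z, symmetric])
    finally show ?thesis .
  qed
  finally show ?thesis using Nd N0 unfolding vd_def w_def by simp
qed

lemma pd_cont:
  assumes d: "2 \<le> d" and v: "gol_vtx e g s (d-1) \<noteq> 0"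
  shows "isCont (\<lambda>\<delta>. ip d (scl d \<delta> w) (pdelta d e g \<delta> p s)) 0"
proof -
  have N: "(\<Sum>k = 1..d. scl d 0 (gol_vtx e g s) k * scl d 0 (gol_vtx e g s) k) \<noteq> 0"
    using N_pos[where x="gol_vtx e g s" and \<delta>=0, OF d v] unfolding ip_def by simp
  show ?thesis unfolding ip_def pdelta_def Let_def
    by (intro continuous_intros N)
qed

theorem corollary3:
  fixes d :: nat and \<epsilon> \<gamma> :: real and P :: "(nat \<Rightarrow> real) \<Rightarrow> (nat \<Rightarrow> real)"
  assumes "d \<ge> 2"
    and "0 < 4 * \<gamma>" and "4 * \<gamma> < \<epsilon>" and "\<epsilon> < 1 / 2"
    and P: "\<And>\<sigma>. \<sigma> \<in> sign_vectors d \<Longrightarrow>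
              P \<sigma> \<in> subS d \<inter> dual_gol d \<epsilon> \<gamma> \<and>
              ip d (P \<sigma>) (gol_vtx \<epsilon> \<gamma> \<sigma>) = 1 \<and>
              (\<forall>\<tau>\<in>sign_vectors d. \<tau> \<noteq> \<sigma> \<longrightarrow> ip d (P \<sigma>) (gol_vtx \<epsilon> \<gamma> \<tau>) < 1)"
  shows "(\<exists>\<delta>0>0. \<forall>\<delta>. 0 < \<delta> \<and> \<delta> < \<delta>0 \<longrightarrow>
            (\<forall>\<sigma>\<in>sign_vectors d. \<forall>\<tau>\<in>sign_vectors d.
               \<sigma> (d - 1) = 1 \<and> \<sigma> d = 1 \<and> \<tau> (d - 1) = 1 \<and> \<tau> d = 1 \<and> \<sigma> \<noteq> \<tau> \<longrightarrow>
               (\<exists>k\<in>{1..d}. pdelta d \<epsilon> \<gamma> \<delta> (P \<sigma>) \<sigma> k \<noteq> pdelta d \<epsilon> \<gamma> \<delta> (P \<tau>) \<tau> k)))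
       \<and> (\<forall>\<sigma>\<in>sign_vectors d. \<forall>\<tau>\<in>sign_vectors d.
               \<sigma> (d - 1) = 1 \<and> \<sigma> d = 1 \<and> \<tau> (d - 1) = 1 \<and> \<tau> d = 1 \<and> \<sigma> \<noteq> \<tau> \<longrightarrow>
               (\<exists>k\<in>{1..d}. qpt d \<epsilon> \<gamma> (P \<sigma>) \<sigma> k \<noteq> qpt d \<epsilon> \<gamma> (P \<tau>) \<tau> k))"
proof -
  have d2: "2 \<le> d" by fact
  have e: "0 < \<epsilon>" "\<epsilon> < 1/2" and g: "0 < \<gamma>" "4 * \<gamma> < \<epsilon>" using assms by auto
  define S where "S = sign_vectors d"
  define v where "v = gol_vtx \<epsilon> \<gamma>"
  have finS: "finite S" unfolding S_def by (rule finite_sv)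
  have sv: "\<forall>j. 1 \<le> j \<and> j \<le> d \<longrightarrow> \<sigma> j = 1 \<or> \<sigma> j = -1" if "\<sigma> \<in> S" for \<sigma>
    using that by (auto simp: S_def sign_vectors_def)
  have zpos: "zz \<epsilon> \<gamma> \<sigma> k > 0" if "\<sigma> \<in> S" "1 \<le> k" "k \<le> d" for \<sigma> k
    using gol_inv[OF e g sv[OF that(1)], of k] that e by auto
  have vpos: "v \<sigma> (d-1) > 0 \<and> v \<sigma> d > 0" if "\<sigma> \<in> S" "\<sigma> (d-1) = 1" "\<sigma> d = 1" for \<sigma>
    using zpos[OF that(1), of "d-1"] zpos[OF that(1), of d] d2 that gol_zz[of \<epsilon> \<gamma> \<sigma> "d-1"]
      gol_zz[of \<epsilon> \<gamma> \<sigma> d] unfolding v_def by auto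
  have Psub: "\<forall>k\<in>{1..d-2}. P \<sigma> k = 0" if "\<sigma> \<in> S" for \<sigma>
    using P[of \<sigma>] that by (auto simp: S_def subS_def)
  have ipP: "ip d (P \<sigma>) (v \<tau>) = P \<sigma> (d-1) * v \<tau> (d-1) + P \<sigma> d * v \<tau> d" if "\<sigma> \<in> S" for \<sigma> \<tau>
    by (rule ip_last2[OF d2 Psub[OF that]])
  have Pself: "ip d (P \<sigma>) (v \<sigma>) = 1" if "\<sigma> \<in> S" for \<sigma>
    using P[of \<sigma>] that unfolding S_def v_def by auto
  have Pother: "ip d (P \<sigma>) (v \<tau>) < 1" if "\<sigma> \<in> S" "\<tau> \<in> S" "\<tau> \<noteq> \<sigma>" for \<sigma> \<tau>
    using P[of \<sigma>] that unfolding S_def v_def by auto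
  have Pdual: "ip d (P \<sigma>) (v \<tau>) \<le> 1" if "\<sigma> \<in> S" "\<tau> \<in> S" for \<sigma> \<tau>
    using P[of \<sigma>] that ip_comm unfolding S_def v_def dual_gol_def by fastforce
  define t0 :: "nat \<Rightarrow> real" where
    "t0 = (\<lambda>k. if 1 \<le> k \<and> k \<le> d-2 then -1 else if k = d-1 \<or> k = d then 1 else 0)"
  define t1 where "t1 = t0(d := -1)"
  have t0S: "t0 \<in> S" and t1S: "t1 \<in> S" using d2
    by (auto simp: S_def sign_vectors_def t0_def t1_def)
  have t0m: "\<forall>j. 1 \<le> j \<and> j \<le> d-2 \<longrightarrow> t0 j = -1" by (simp add: t0_def)
  have z0: "zz \<epsilon> \<gamma> t0 (d-1) = 1" using all_minus[OF t0m, of \<epsilon> \<gamma>] d2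
    by (metis Suc_diff_Suc Suc_1 le_add_diff_inverse2 add_2_eq_Suc' diff_Suc_1 Suc_pred' le_eq_less_or_eq)
  have "\<not> (d-1 \<le> d-2)" using d2 by arith
  then have "t0 (d-1) = 1" by (simp add: t0_def)
  then have t0v: "v t0 (d-1) = 1" using z0 gol_zz[of \<epsilon> \<gamma> t0 "d-1"] unfolding v_def by simp
  have t1v: "v t1 (d-1) = 1"
  proof -
    have "gol_vtx \<epsilon> \<gamma> t1 (d-1) = gol_vtx \<epsilon> \<gamma> t0 (d-1)"
      by (rule gol_local) (use d2 in \<open>auto simp: t1_def\<close>)
    then show ?thesis using t0v unfolding v_def by simp
  qed
  have t01: "v t1 d = - v t0 d"
  proof -
    have "zz \<epsilon> \<gamma> t1 d = zz \<epsilon> \<gamma> t0 d"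
      by (rule zz_local) (auto simp: t1_def)
    moreover have "t0 d = 1" "t1 d = -1" using d2 by (simp_all add: t0_def t1_def)
    ultimately show ?thesis using gol_zz[of \<epsilon> \<gamma> t1 d] gol_zz[of \<epsilon> \<gamma> t0 d] unfolding v_def
      by simp
  qed
  have p1le: "P \<sigma> (d-1) \<le> 1" if "\<sigma> \<in> S" for \<sigma>
    using Pdual[OF that t0S] Pdual[OF that t1S] ipP[OF that, of t0] ipP[OF that, of t1] t0v t1v t01
    by simp
  have qpart: "\<forall>\<sigma>\<in>S. \<forall>\<tau>\<in>S. \<sigma> (d - 1) = 1 \<and> \<sigma> d = 1 \<and> \<tau> (d - 1) = 1 \<and> \<tau> d = 1 \<and> \<sigma> \<noteq> \<tau> \<longrightarrow>
               (\<exists>k\<in>{1..d}. qpt d \<epsilon> \<gamma> (P \<sigma>) \<sigma> k \<noteq> qpt d \<epsilon> \<gamma> (P \<tau>) \<tau> k)"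
  proof (intro ballI impI)
    fix \<sigma> \<tau> assume sS: "\<sigma> \<in> S" and tS: "\<tau> \<in> S"
      and c: "\<sigma> (d - 1) = 1 \<and> \<sigma> d = 1 \<and> \<tau> (d - 1) = 1 \<and> \<tau> d = 1 \<and> \<sigma> \<noteq> \<tau>"
    have vs: "v \<sigma> (d-1) > 0" "v \<sigma> d > 0" using vpos[OF sS] c by auto
    have vt: "v \<tau> (d-1) > 0" "v \<tau> d > 0" using vpos[OF tS] c by auto
    show "\<exists>k\<in>{1..d}. qpt d \<epsilon> \<gamma> (P \<sigma>) \<sigma> k \<noteq> qpt d \<epsilon> \<gamma> (P \<tau>) \<tau> k"
    proof (rule ccontr)
      assume "\<not> ?thesis"
      then have "qpt d \<epsilon> \<gamma> (P \<sigma>) \<sigma> d = qpt d \<epsilon> \<gamma> (P \<tau>) \<tau> d" using d2 by auto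
      then have eq: "P \<sigma> d - (P \<sigma> (d-1) - 2) * v \<sigma> d / v \<sigma> (d-1)
          = P \<tau> d - (P \<tau> (d-1) - 2) * v \<tau> d / v \<tau> (d-1)"
        using q_d[OF d2, of \<epsilon> \<gamma> \<sigma> "P \<sigma>"] q_d[OF d2, of \<epsilon> \<gamma> \<tau> "P \<tau>"] vs vt unfolding v_def by simp
      have ne: "\<tau> \<noteq> \<sigma>" using c by auto
      have h1: "v \<sigma> (d-1) * P \<sigma> (d-1) + v \<sigma> d * P \<sigma> d = 1"
        using Pself[OF sS] ipP[OF sS, of \<sigma>] by (simp add: mult.commute)
      have h2: "v \<tau> (d-1) * P \<sigma> (d-1) + v \<tau> d * P \<sigma> d < 1"
        using Pother[OF sS tS ne] ipP[OF sS, of \<tau>] by (simp add: mult.commute)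
      have h3: "v \<sigma> (d-1) * P \<tau> (d-1) + v \<sigma> d * P \<tau> d < 1"
        using Pother[OF tS sS] ne ipP[OF tS, of \<sigma>] by (simp add: mult.commute)
      have h4: "v \<tau> (d-1) * P \<tau> (d-1) + v \<tau> d * P \<tau> d = 1"
        using Pself[OF tS] ipP[OF tS, of \<tau>] by (simp add: mult.commute)
      have h5: "P \<sigma> (d-1) < 2" "P \<tau> (d-1) < 2" using p1le[OF sS] p1le[OF tS] by auto
      show False
        by (rule alg_q[OF vs(1) vt(1) h1 h2 h3 h4 h5 eq])
    qed
  qed
  define F where "F \<sigma> \<tau> \<delta> = ip d (scl d \<delta> (v \<tau>)) (pdelta d \<epsilon> \<gamma> \<delta> (P \<sigma>) \<sigma>)" for \<sigma> \<tau> \<delta>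
  define T where "T = {(\<sigma>, \<tau>). \<sigma> \<in> S \<and> \<tau> \<in> S \<and> \<sigma> (d - 1) = 1 \<and> \<sigma> d = 1 \<and> \<tau> (d - 1) = 1 \<and> \<tau> d = 1 \<and> \<sigma> \<noteq> \<tau>}"
  have finT: "finite T"
    by (rule finite_subset[of _ "S \<times> S"]) (auto simp: T_def finS)
  have ev: "\<forall>x\<in>T. eventually (\<lambda>\<delta>. F (fst x) (snd x) \<delta> < 1) (at_right 0)"
  proof
    fix x assume xT: "x \<in> T"
    obtain \<sigma> \<tau> where x: "x = (\<sigma>, \<tau>)" by fastforce
    have sS: "\<sigma> \<in> S" and tS: "\<tau> \<in> S" and c: "\<sigma> (d-1) = 1" "\<sigma> d = 1" and ne: "\<tau> \<noteq> \<sigma>"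
      using xT unfolding x T_def by auto
    have vs: "gol_vtx \<epsilon> \<gamma> \<sigma> (d-1) \<noteq> 0" using vpos[OF sS c] unfolding v_def by auto
    have cont: "isCont (F \<sigma> \<tau>) 0" unfolding F_def[abs_def] using pd_cont[OF d2 vs] by simp
    have F0: "F \<sigma> \<tau> 0 = ip d (P \<sigma>) (v \<tau>)"
    proof -
      have "F \<sigma> \<tau> 0 = ip d (P \<sigma>) (scl d 0 (v \<tau>))" unfolding F_def pd_zero by (rule ip_comm)
      also have "\<dots> = P \<sigma> (d-1) * v \<tau> (d-1) + P \<sigma> d * v \<tau> d"
        using ip_last2[OF d2 Psub[OF sS]] scl_last[OF d2] by simp
      also have "\<dots> = ip d (P \<sigma>) (v \<tau>)" using ipP[OF sS] by simp
      finally show ?thesis .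
    qed
    have lt: "F \<sigma> \<tau> 0 < 1" using F0 Pother[OF sS tS ne] by simp
    have "((F \<sigma> \<tau>) \<longlongrightarrow> F \<sigma> \<tau> 0) (at 0)" using cont by (simp add: isCont_def)
    then have "eventually (\<lambda>\<delta>. F \<sigma> \<tau> \<delta> < 1) (at 0)" using lt by (rule order_tendstoD(2))
    then show "eventually (\<lambda>\<delta>. F (fst x) (snd x) \<delta> < 1) (at_right 0)"
      unfolding x by (simp add: eventually_at_split)
  qed
  have "eventually (\<lambda>\<delta>. \<forall>x\<in>T. F (fst x) (snd x) \<delta> < 1) (at_right 0)"
    by (rule eventually_ball_finite[OF finT ev])
  then obtain b :: real where b: "b > 0" "\<forall>y>0. y < b \<longrightarrow> (\<forall>x\<in>T. F (fst x) (snd x) y < 1)"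
    unfolding eventually_at_right_field by auto
  have ppart: "\<forall>\<delta>. 0 < \<delta> \<and> \<delta> < b \<longrightarrow>
            (\<forall>\<sigma>\<in>S. \<forall>\<tau>\<in>S.
               \<sigma> (d - 1) = 1 \<and> \<sigma> d = 1 \<and> \<tau> (d - 1) = 1 \<and> \<tau> d = 1 \<and> \<sigma> \<noteq> \<tau> \<longrightarrow>
               (\<exists>k\<in>{1..d}. pdelta d \<epsilon> \<gamma> \<delta> (P \<sigma>) \<sigma> k \<noteq> pdelta d \<epsilon> \<gamma> \<delta> (P \<tau>) \<tau> k))"
  proof (intro allI impI ballI)
    fix \<delta> \<sigma> \<tau> assume dl: "0 < \<delta> \<and> \<delta> < b" and sS: "\<sigma> \<in> S" and tS: "\<tau> \<in> S"
      and c: "\<sigma> (d - 1) = 1 \<and> \<sigma> d = 1 \<and> \<tau> (d - 1) = 1 \<and> \<tau> d = 1 \<and> \<sigma> \<noteq> \<tau>"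
    have inT: "(\<sigma>, \<tau>) \<in> T" using sS tS c by (auto simp: T_def)
    have lt: "F \<sigma> \<tau> \<delta> < 1" using b(2) dl inT by fastforce
    show "\<exists>k\<in>{1..d}. pdelta d \<epsilon> \<gamma> \<delta> (P \<sigma>) \<sigma> k \<noteq> pdelta d \<epsilon> \<gamma> \<delta> (P \<tau>) \<tau> k"
    proof (rule ccontr)
      assume "\<not> ?thesis"
      then have eqk: "\<forall>k\<in>{1..d}. pdelta d \<epsilon> \<gamma> \<delta> (P \<sigma>) \<sigma> k = pdelta d \<epsilon> \<gamma> \<delta> (P \<tau>) \<tau> k" by auto
      have vt: "gol_vtx \<epsilon> \<gamma> \<tau> (d-1) \<noteq> 0" using vpos[OF tS] c unfolding v_def by auto
      have "F \<sigma> \<tau> \<delta> = ip d (scl d \<delta> (v \<tau>)) (pdelta d \<epsilon> \<gamma> \<delta> (P \<tau>) \<tau>)"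
        unfolding F_def ip_def using eqk by (intro sum.cong) auto
      also have "\<dots> = ip d (P \<tau>) (v \<tau>)" unfolding v_def by (rule pd_self[OF d2 vt Psub[OF tS]])
      also have "\<dots> = 1" by (rule Pself[OF tS])
      finally show False using lt by simp
    qed
  qed
  show ?thesis using ppart qpart b(1) unfolding S_def by blast
qed

end
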